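(* Let $X$ be a Hausdorff topological space and $(U_i)_{i\in I}$ a family of open subsets of $X$. Say a family $(W_j)_{j\in J}$ of open subsets of $X$ has property ( * ) if for all $j,k\in J$ with $W_j\cap W_k\neq\emptyset$ there exists $i\in I$ with $W_j\cup W_k\subseteq U_i$. (a) If $X$ is regular, $M$ is a compact subset of $X$ and $(U_i)_{i\in I}$ covers $M$, then there is a cover $(W_j)_{j\in J}$ of $M$ by open subsets of $X$ with property ( * ). (b) If $X$ is paracompact and $(U_i)_{i\in I}$ covers $X$, then there is an open cover $(W_j)_{j\in J}$ of $X$ with property ( * ). (c) If $X$ is paracompact, $M$ is a closed subset of $X$ and $(U_i)_{i\in I}$ covers $M$, then there is a cover $(W_j)_{j\in J}$ of $M$ by open subsets of $X$ with property ( * ). (d) If $M$ is a locally closed subset of $X$ (i.e., each point of $M$ has a neighborhood $U$ in $X$ with $U\cap M$ relatively closed in $U$), every open neighborhood of $M$ in $X$ contains a paracompact open neighborhood of $M$ in $X$, and $(U_i)_{i\in I}$ covers $M$, then there is a cover $(W_j)_{j\in J}$ of $M$ by open subsets of $X$ with property ( * ). *)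

theory Defs
  imports "HOL-Analysis.Analysis"
begin

definition paracompact_space :: "'a topology \<Rightarrow> bool" where
  "paracompact_space X \<longleftrightarrow>
     (\<forall>\<U>. (\<forall>U\<in>\<U>. openin X U) \<and> \<Union>\<U> = topspace X \<longrightarrow>
        (\<exists>\<V>. (\<forall>V\<in>\<V>. openin X V) \<and> \<Union>\<V> = topspace X \<and> locally_finite_in X \<V> \<and>
              (\<forall>V\<in>\<V>. \<exists>U\<in>\<U>. V \<subseteq> U)))"

definition locally_closed_in :: "'a topology \<Rightarrow> 'a set \<Rightarrow> bool" where
  "locally_closed_in X M \<longleftrightarrow> M \<subseteq> topspace X \<and>
     (\<forall>x\<in>M. \<exists>N. (\<exists>G. openin X G \<and> x \<in> G \<and> G \<subseteq> N) \<and> N \<subseteq> topspace X \<and>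
                 closedin (subtopology X N) (N \<inter> M))"

definition star_property :: "'a topology \<Rightarrow> 'i set \<Rightarrow> ('i \<Rightarrow> 'a set) \<Rightarrow> 'a set set \<Rightarrow> bool" where
  "star_property X I U \<W> \<longleftrightarrow>
     (\<forall>W\<in>\<W>. openin X W) \<and>
     (\<forall>A\<in>\<W>. \<forall>B\<in>\<W>. A \<inter> B \<noteq> {} \<longrightarrow> (\<exists>i\<in>I. A \<union> B \<subseteq> U i))"

end

theory Submission imports Defs begin

lemma core:
  assumes lf: "locally_finite_in X \<G>" and op: "\<forall>G\<in>\<G>. openin X G"
    and cG: "\<forall>G\<in>\<G>. openin X (c G) \<and> X closure_of G \<subseteq> c G"
  shows "\<exists>\<W>. (\<forall>W\<in>\<W>. openin X W) \<and> \<Union>\<W> = \<Union>\<G> \<and>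
           (\<forall>A\<in>\<W>. \<forall>B\<in>\<W>. A \<inter> B \<noteq> {} \<longrightarrow> (\<exists>G\<in>\<G>. A \<union> B \<subseteq> c G))"
proof -
  define W where "W x = \<Union>\<G> \<inter> \<Inter> (c ` {G\<in>\<G>. x \<in> X closure_of G})
      \<inter> (topspace X - \<Union> ((\<lambda>G. X closure_of G) ` {G\<in>\<G>. x \<notin> X closure_of G}))" for x
  have memW: "z \<in> W x \<longleftrightarrow> z \<in> \<Union>\<G> \<and> (\<forall>G\<in>\<G>. x \<in> X closure_of G \<longrightarrow> z \<in> c G)
     \<and> z \<in> topspace X \<and> (\<forall>G\<in>\<G>. x \<notin> X closure_of G \<longrightarrow> z \<notin> X closure_of G)" for z x
    by (simp add: W_def) blast
  have sub: "\<Union>\<G> \<subseteq> topspace X" using lf by (simp add: locally_finite_in_def)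
  have fin: "finite {G\<in>\<G>. x \<in> X closure_of G}" if xt: "x \<in> topspace X" for x
  proof -
    have lfx: "\<forall>x\<in>topspace X. \<exists>V. openin X V \<and> x \<in> V \<and> finite {U \<in> \<G>. U \<inter> V \<noteq> {}}"
      using lf by (simp add: locally_finite_in_def)
    obtain V where V: "openin X V" "x \<in> V" "finite {G\<in>\<G>. G \<inter> V \<noteq> {}}"
      using bspec[OF lfx xt] by (elim exE conjE)
    have "{G\<in>\<G>. x \<in> X closure_of G} \<subseteq> {G\<in>\<G>. G \<inter> V \<noteq> {}}"
    proof (rule subsetI)
      fix G assume G: "G \<in> {G\<in>\<G>. x \<in> X closure_of G}"
      then have "V \<inter> X closure_of G \<noteq> {}" using V(2) by blast
      then have "G \<inter> V \<noteq> {}" using openin_Int_closure_of_eq_empty[OF V(1), of G] by blast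
      then show "G \<in> {G\<in>\<G>. G \<inter> V \<noteq> {}}" using G by blast
    qed
    then show ?thesis using V(3) finite_subset by blast
  qed
  have openW: "openin X (W x)" if "x \<in> \<Union>\<G>" for x
  proof -
    have x: "x \<in> topspace X" using that sub by blast
    have o0: "openin X (\<Union>\<G>)" using op by (simp add: openin_Union)
    have o1: "openin X (\<Union>\<G> \<inter> \<Inter> (c ` {G\<in>\<G>. x \<in> X closure_of G}))"
    proof (cases "{G\<in>\<G>. x \<in> X closure_of G} = {}")
      case True show ?thesis unfolding True using o0 by simp
    next
      case False
      have "openin X (\<Inter> (c ` {G\<in>\<G>. x \<in> X closure_of G}))"
        using False fin[OF x] cG by (intro openin_Inter) auto
      then show ?thesis using o0 by (rule openin_Int[rotated])
    qed
    have "closedin X (\<Union> ((\<lambda>G. X closure_of G) ` {G\<in>\<G>. x \<notin> X closure_of G}))"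
      by (rule closedin_Union_locally_finite_closure, rule locally_finite_in_subset[OF lf]) auto
    then have "openin X (topspace X - \<Union> ((\<lambda>G. X closure_of G) ` {G\<in>\<G>. x \<notin> X closure_of G}))"
      by (rule openin_diff[OF openin_topspace])
    with o1 show ?thesis unfolding W_def by (rule openin_Int)
  qed
  have inW: "x \<in> W x" if "x \<in> \<Union>\<G>" for x
    unfolding memW using that sub cG by blast
  have WG: "W x \<subseteq> \<Union>\<G>" for x using memW by blast
  show ?thesis
  proof (intro exI conjI ballI impI)
    show "openin X A" if "A \<in> W ` \<Union>\<G>" for A using that openW by blast
    show "\<Union> (W ` \<Union>\<G>) = \<Union>\<G>" using inW WG by blast
    fix A B assume A: "A \<in> W ` \<Union>\<G>" and B: "B \<in> W ` \<Union>\<G>" and AB: "A \<inter> B \<noteq> {}"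
    obtain x y where xy: "A = W x" "B = W y" using A B by blast
    obtain z where z: "z \<in> W x" "z \<in> W y" using AB xy by blast
    then obtain G where G: "G \<in> \<G>" "z \<in> G" using memW by blast
    have zc: "z \<in> X closure_of G" using G sub by (meson closure_of_subset Union_upper subsetD subset_trans)
    have "x \<in> X closure_of G" using z(1) zc G(1) memW by blast
    then have "W x \<subseteq> c G" using G(1) memW by blast
    moreover have "y \<in> X closure_of G" using z(2) zc G(1) memW by blast
    then have "W y \<subseteq> c G" using G(1) memW by blast
    ultimately show "\<exists>G\<in>\<G>. A \<union> B \<subseteq> c G" using G xy by blast
  qed
qed

lemma reg_nbhd:
  assumes "regular_space X" "openin X U" "x \<in> U"
  shows "\<exists>G. openin X G \<and> x \<in> G \<and> X closure_of G \<subseteq> U"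
proof -
  have "closedin X (topspace X - U)" using assms by auto
  moreover have "x \<in> topspace X - (topspace X - U)" using assms openin_subset by auto
  ultimately obtain G where "openin X G" "x \<in> G" "disjnt (topspace X - U) (X closure_of G)"
    using assms(1) unfolding regular_space by blast
  then show ?thesis using closure_of_subset_topspace[of X G] by (auto simp: disjnt_iff)
qed

lemma para_regular:
  assumes P: "paracompact_space X" and H: "Hausdorff_space X"
  shows "regular_space X"
  unfolding regular_space
proof (intro allI impI)
  fix C a assume Ca: "closedin X C \<and> a \<in> topspace X - C"
  define \<U> where "\<U> = insert (topspace X - C) {Q. openin X Q \<and> a \<notin> X closure_of Q}"
  have Uop: "\<forall>U\<in>\<U>. openin X U" using Ca unfolding \<U>_def by auto
  have cov: "\<Union>\<U> = topspace X"
  proof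
    show "\<Union>\<U> \<subseteq> topspace X" using Uop openin_subset by auto
    show "topspace X \<subseteq> \<Union>\<U>"
    proof
      fix c assume c: "c \<in> topspace X"
      show "c \<in> \<Union>\<U>"
      proof (cases "c \<in> C")
        case False then show ?thesis using c unfolding \<U>_def by auto
      next
        case True
        then have "c \<noteq> a" using Ca by auto
        moreover have "a \<in> topspace X" using Ca by blast
        ultimately have "\<exists>Q P. openin X Q \<and> openin X P \<and> c \<in> Q \<and> a \<in> P \<and> disjnt Q P"
          using H c unfolding Hausdorff_space_def by simp
        then obtain Q P where OP: "openin X Q" "openin X P" "c \<in> Q" "a \<in> P" "disjnt Q P"
          by blast
        have "P \<inter> Q = {}" using OP(5) by (auto simp: disjnt_def)
        then have "P \<inter> X closure_of Q = {}" using openin_Int_closure_of_eq_empty[OF OP(2), of Q] by simp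
        then have "a \<notin> X closure_of Q" using OP(4) by blast
        then show ?thesis using OP unfolding \<U>_def by auto
      qed
    qed
  qed
  obtain \<V> where V: "\<forall>V\<in>\<V>. openin X V" "\<Union>\<V> = topspace X" "locally_finite_in X \<V>"
      "\<forall>V\<in>\<V>. \<exists>U\<in>\<U>. V \<subseteq> U"
  proof -
    have "(\<forall>U\<in>\<U>. openin X U) \<and> \<Union>\<U> = topspace X \<longrightarrow>
        (\<exists>\<V>. (\<forall>V\<in>\<V>. openin X V) \<and> \<Union>\<V> = topspace X \<and> locally_finite_in X \<V> \<and>
              (\<forall>V\<in>\<V>. \<exists>U\<in>\<U>. V \<subseteq> U))"
      using P unfolding paracompact_space_def by (rule spec)
    from mp[OF this conjI[OF Uop cov]] obtain \<V>0 where
      "(\<forall>V\<in>\<V>0. openin X V)" "\<Union>\<V>0 = topspace X" "locally_finite_in X \<V>0"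
      "(\<forall>V\<in>\<V>0. \<exists>U\<in>\<U>. V \<subseteq> U)" by blast
    then show ?thesis by (rule that)
  qed
  define \<V>' where "\<V>' = {V\<in>\<V>. V \<inter> C \<noteq> {}}"
  define S where "S = \<Union>\<V>'"
  have CS: "C \<subseteq> S"
  proof
    fix y assume y: "y \<in> C"
    then have "y \<in> topspace X" using Ca closedin_subset by blast
    then obtain V where "V \<in> \<V>" "y \<in> V" using V(2) by blast
    then have "V \<in> \<V>'" using y unfolding \<V>'_def by blast
    then show "y \<in> S" unfolding S_def using \<open>y \<in> V\<close> by blast
  qed
  have Sop: "openin X S" unfolding S_def
    by (rule openin_Union) (use V(1) in \<open>simp add: \<V>'_def\<close>)
  have anot: "a \<notin> X closure_of V" if Vin: "V \<in> \<V>'" for V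
  proof -
    have VV: "V \<in> \<V>" and VC: "V \<inter> C \<noteq> {}" using Vin unfolding \<V>'_def by simp_all
    obtain U where U: "U \<in> \<U>" "V \<subseteq> U" using bspec[OF V(4) VV] by blast
    have "U \<noteq> topspace X - C" using U(2) VC by blast
    then have "U \<in> {Q. openin X Q \<and> a \<notin> X closure_of Q}" using U(1) unfolding \<U>_def by simp
    then have "a \<notin> X closure_of U" by simp
    then show ?thesis using closure_of_mono[OF U(2)] by blast
  qed
  have sub': "\<V>' \<subseteq> \<V>" unfolding \<V>'_def by blast
  have "X closure_of S = \<Union> ((\<lambda>V. X closure_of V) ` \<V>')"
    unfolding S_def by (rule closure_of_locally_finite_Union, rule locally_finite_in_subset[OF V(3) sub'])
  then have aS: "a \<notin> X closure_of S" using anot by blast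
  show "\<exists>U. openin X U \<and> a \<in> U \<and> disjnt C (X closure_of U)"
  proof (intro exI conjI)
    show "openin X (topspace X - X closure_of S)" by (simp add: openin_diff closedin_closure_of)
    show "a \<in> topspace X - X closure_of S" using Ca aS by blast
    have "S \<subseteq> X closure_of S" using closure_of_subset[OF openin_subset[OF Sop]] .
    then have "S \<inter> (topspace X - X closure_of S) = {}" by blast
    then have "S \<inter> X closure_of (topspace X - X closure_of S) = {}"
      using openin_Int_closure_of_eq_empty[OF Sop] by blast
    then show "disjnt C (X closure_of (topspace X - X closure_of S))"
      unfolding disjnt_def using CS by blast
  qed
qed

lemma gen_b:
  assumes P: "paracompact_space X" and H: "Hausdorff_space X"
    and Uop: "\<forall>U\<in>\<U>. openin X U" and cov: "topspace X \<subseteq> \<Union>\<U>"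
  shows "\<exists>\<W>. (\<forall>W\<in>\<W>. openin X W) \<and> \<Union>\<W> = topspace X \<and>
           (\<forall>A\<in>\<W>. \<forall>B\<in>\<W>. A \<inter> B \<noteq> {} \<longrightarrow> (\<exists>U\<in>\<U>. A \<union> B \<subseteq> U))"
proof -
  have R: "regular_space X" using para_regular[OF P H] .
  define \<G>0 where "\<G>0 = {G. openin X G \<and> (\<exists>U\<in>\<U>. X closure_of G \<subseteq> U)}"
  have G0op: "\<forall>G\<in>\<G>0. openin X G" unfolding \<G>0_def by blast
  have G0cov: "\<Union>\<G>0 = topspace X"
  proof
    show "\<Union>\<G>0 \<subseteq> topspace X" using G0op openin_subset by blast
    show "topspace X \<subseteq> \<Union>\<G>0"
    proof
      fix x assume "x \<in> topspace X"
      then obtain U where U: "U \<in> \<U>" "x \<in> U" using cov by blast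
      then obtain G where G: "openin X G" "x \<in> G" "X closure_of G \<subseteq> U"
        using reg_nbhd[OF R bspec[OF Uop U(1)] U(2)] by blast
      then have "G \<in> \<G>0" unfolding \<G>0_def using U(1) by blast
      then show "x \<in> \<Union>\<G>0" using G(2) by blast
    qed
  qed
  obtain \<V> where V: "\<forall>V\<in>\<V>. openin X V" "\<Union>\<V> = topspace X" "locally_finite_in X \<V>"
      "\<forall>V\<in>\<V>. \<exists>U\<in>\<G>0. V \<subseteq> U"
  proof -
    have "(\<forall>U\<in>\<G>0. openin X U) \<and> \<Union>\<G>0 = topspace X \<longrightarrow>
        (\<exists>\<V>. (\<forall>V\<in>\<V>. openin X V) \<and> \<Union>\<V> = topspace X \<and> locally_finite_in X \<V> \<and>
              (\<forall>V\<in>\<V>. \<exists>U\<in>\<G>0. V \<subseteq> U))"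
      using P unfolding paracompact_space_def by (rule spec)
    from mp[OF this conjI[OF G0op G0cov]] obtain \<V>0 where
      "(\<forall>V\<in>\<V>0. openin X V)" "\<Union>\<V>0 = topspace X" "locally_finite_in X \<V>0"
      "(\<forall>V\<in>\<V>0. \<exists>U\<in>\<G>0. V \<subseteq> U)" by blast
    then show ?thesis by (rule that)
  qed
  have ex: "\<exists>U. U \<in> \<U> \<and> X closure_of V \<subseteq> U" if Vin: "V \<in> \<V>" for V
  proof -
    obtain G where G: "G \<in> \<G>0" "V \<subseteq> G" using bspec[OF V(4) Vin] by blast
    then obtain U where "U \<in> \<U>" "X closure_of G \<subseteq> U" unfolding \<G>0_def by blast
    moreover have "X closure_of V \<subseteq> X closure_of G" using closure_of_mono[OF G(2)] .
    ultimately show ?thesis by blast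
  qed
  define c where "c V = (SOME U. U \<in> \<U> \<and> X closure_of V \<subseteq> U)" for V
  have c: "c V \<in> \<U> \<and> X closure_of V \<subseteq> c V" if "V \<in> \<V>" for V
    unfolding c_def using someI_ex[OF ex[OF that]] .
  have cG: "\<forall>G\<in>\<V>. openin X (c G) \<and> X closure_of G \<subseteq> c G"
  proof
    fix G assume G: "G \<in> \<V>"
    have "c G \<in> \<U>" using c[OF G] by (rule conjunct1)
    then have oc: "openin X (c G)" by (rule bspec[OF Uop])
    show "openin X (c G) \<and> X closure_of G \<subseteq> c G" by (rule conjI[OF oc conjunct2[OF c[OF G]]])
  qed
  obtain \<W> where W0: "(\<forall>W\<in>\<W>. openin X W) \<and> \<Union>\<W> = \<Union>\<V> \<and>
     (\<forall>A\<in>\<W>. \<forall>B\<in>\<W>. A \<inter> B \<noteq> {} \<longrightarrow> (\<exists>G\<in>\<V>. A \<union> B \<subseteq> c G))"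
    using core[OF V(3) V(1) cG] ..
  note W = conjunct1[OF W0] conjunct1[OF conjunct2[OF W0]] conjunct2[OF conjunct2[OF W0]]
  show ?thesis
  proof (intro exI conjI ballI impI)
    show "openin X A" if "A \<in> \<W>" for A using W(1) that by blast
    show "\<Union>\<W> = topspace X" using W(2) V(2) by simp
    fix A B assume "A \<in> \<W>" "B \<in> \<W>" "A \<inter> B \<noteq> {}"
    then obtain G where "G \<in> \<V>" "A \<union> B \<subseteq> c G" using W(3) by blast
    then show "\<exists>U\<in>\<U>. A \<union> B \<subseteq> U" using c[OF \<open>G \<in> \<V>\<close>] by blast
  qed
qed

lemma gen_c:
  assumes P: "paracompact_space X" and H: "Hausdorff_space X" and M: "closedin X M"
    and Uop: "\<forall>U\<in>\<U>. openin X U" and cov: "M \<subseteq> \<Union>\<U>"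
  shows "\<exists>\<W>. (\<forall>W\<in>\<W>. openin X W) \<and> M \<subseteq> \<Union>\<W> \<and>
           (\<forall>A\<in>\<W>. \<forall>B\<in>\<W>. A \<inter> B \<noteq> {} \<longrightarrow> (\<exists>U\<in>\<U>. A \<union> B \<subseteq> U))"
proof -
  define \<U>' where "\<U>' = insert (topspace X - M) \<U>"
  have Uop': "\<forall>U\<in>\<U>'. openin X U"
  proof
    fix U assume "U \<in> \<U>'"
    then have "U = topspace X - M \<or> U \<in> \<U>" unfolding \<U>'_def by simp
    then show "openin X U"
    proof
      assume "U = topspace X - M" then show ?thesis using M by (simp add: openin_diff)
    next
      assume "U \<in> \<U>" then show ?thesis by (rule bspec[OF Uop])
    qed
  qed
  have cov': "topspace X \<subseteq> \<Union>\<U>'" using cov unfolding \<U>'_def by blast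
  obtain \<W> where W0: "(\<forall>W\<in>\<W>. openin X W) \<and> \<Union>\<W> = topspace X \<and>
      (\<forall>A\<in>\<W>. \<forall>B\<in>\<W>. A \<inter> B \<noteq> {} \<longrightarrow> (\<exists>U\<in>\<U>'. A \<union> B \<subseteq> U))"
    using gen_b[OF P H Uop' cov'] ..
  note W = conjunct1[OF W0] conjunct1[OF conjunct2[OF W0]] conjunct2[OF conjunct2[OF W0]]
  define \<W>' where "\<W>' = {W\<in>\<W>. W \<inter> M \<noteq> {}}"
  have W'W: "\<W>' \<subseteq> \<W>" unfolding \<W>'_def by blast
  show ?thesis
  proof (intro exI conjI ballI impI)
    show "openin X A" if A: "A \<in> \<W>'" for A using bspec[OF W(1)] W'W A by blast
    show "M \<subseteq> \<Union>\<W>'"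
    proof
      fix y assume y: "y \<in> M"
      then have "y \<in> topspace X" using closedin_subset[OF M] by blast
      then obtain W where "W \<in> \<W>" "y \<in> W" using W(2) by blast
      then have "W \<in> \<W>'" using y unfolding \<W>'_def by blast
      then show "y \<in> \<Union>\<W>'" using \<open>y \<in> W\<close> by blast
    qed
    fix A B assume A: "A \<in> \<W>'" and B: "B \<in> \<W>'" and AB: "A \<inter> B \<noteq> {}"
    have "\<exists>U\<in>\<U>'. A \<union> B \<subseteq> U" using W(3) W'W A B AB by blast
    then obtain U where U: "U \<in> \<U>'" "A \<union> B \<subseteq> U" by blast
    have AM: "A \<inter> M \<noteq> {}" using A unfolding \<W>'_def by blast
    have "U \<noteq> topspace X - M" using U(2) AM by blast
    then have "U \<in> \<U>" using U(1) unfolding \<U>'_def by simp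
    then show "\<exists>U\<in>\<U>. A \<union> B \<subseteq> U" using U(2) by blast
  qed
qed

lemma gen_a:
  assumes R: "regular_space X" and M: "compactin X M"
    and Uop: "\<forall>U\<in>\<U>. openin X U" and cov: "M \<subseteq> \<Union>\<U>"
  shows "\<exists>\<W>. (\<forall>W\<in>\<W>. openin X W) \<and> M \<subseteq> \<Union>\<W> \<and>
           (\<forall>A\<in>\<W>. \<forall>B\<in>\<W>. A \<inter> B \<noteq> {} \<longrightarrow> (\<exists>U\<in>\<U>. A \<union> B \<subseteq> U))"
proof -
  define \<G>0 where "\<G>0 = {G. openin X G \<and> (\<exists>U\<in>\<U>. X closure_of G \<subseteq> U)}"
  have G0op: "\<forall>G\<in>\<G>0. openin X G" unfolding \<G>0_def by blast
  have G0cov: "M \<subseteq> \<Union>\<G>0"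
  proof
    fix x assume "x \<in> M"
    then obtain U where U: "U \<in> \<U>" "x \<in> U" using cov by blast
    then obtain G where G: "openin X G" "x \<in> G" "X closure_of G \<subseteq> U"
      using reg_nbhd[OF R bspec[OF Uop U(1)] U(2)] by blast
    then have "G \<in> \<G>0" unfolding \<G>0_def using U(1) by blast
    then show "x \<in> \<Union>\<G>0" using G(2) by blast
  qed
  have "(\<forall>U\<in>\<G>0. openin X U) \<and> M \<subseteq> \<Union>\<G>0
          \<longrightarrow> (\<exists>\<F>. finite \<F> \<and> \<F> \<subseteq> \<G>0 \<and> M \<subseteq> \<Union>\<F>)"
    using M unfolding compactin_def by (elim conjE) (rule spec)
  from mp[OF this conjI[OF G0op G0cov]] obtain \<V> where
     V0: "finite \<V> \<and> \<V> \<subseteq> \<G>0 \<and> M \<subseteq> \<Union>\<V>" ..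
  note V = conjunct1[OF V0] conjunct1[OF conjunct2[OF V0]] conjunct2[OF conjunct2[OF V0]]
  have Vop: "\<forall>V\<in>\<V>. openin X V" using G0op V(2) by blast
  have lf: "locally_finite_in X \<V>"
  proof (rule finite_imp_locally_finite_in[OF V(1)])
    show "\<Union>\<V> \<subseteq> topspace X" using Vop openin_subset by blast
  qed
  have ex: "\<exists>U. U \<in> \<U> \<and> X closure_of V \<subseteq> U" if Vin: "V \<in> \<V>" for V
  proof -
    have "V \<in> \<G>0" using V(2) Vin by blast
    then show ?thesis unfolding \<G>0_def by blast
  qed
  define c where "c V = (SOME U. U \<in> \<U> \<and> X closure_of V \<subseteq> U)" for V
  have c: "c V \<in> \<U> \<and> X closure_of V \<subseteq> c V" if "V \<in> \<V>" for V
    unfolding c_def using someI_ex[OF ex[OF that]] .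
  have cG: "\<forall>G\<in>\<V>. openin X (c G) \<and> X closure_of G \<subseteq> c G"
  proof
    fix G assume G: "G \<in> \<V>"
    have "c G \<in> \<U>" using c[OF G] by (rule conjunct1)
    then have oc: "openin X (c G)" by (rule bspec[OF Uop])
    show "openin X (c G) \<and> X closure_of G \<subseteq> c G" by (rule conjI[OF oc conjunct2[OF c[OF G]]])
  qed
  obtain \<W> where W0: "(\<forall>W\<in>\<W>. openin X W) \<and> \<Union>\<W> = \<Union>\<V> \<and>
     (\<forall>A\<in>\<W>. \<forall>B\<in>\<W>. A \<inter> B \<noteq> {} \<longrightarrow> (\<exists>G\<in>\<V>. A \<union> B \<subseteq> c G))"
    using core[OF lf Vop cG] ..
  note W = conjunct1[OF W0] conjunct1[OF conjunct2[OF W0]] conjunct2[OF conjunct2[OF W0]]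
  show ?thesis
  proof (intro exI conjI ballI impI)
    show "openin X A" if "A \<in> \<W>" for A using W(1) that by blast
    show "M \<subseteq> \<Union>\<W>" using W(2) V(3) by simp
    fix A B assume "A \<in> \<W>" "B \<in> \<W>" "A \<inter> B \<noteq> {}"
    then obtain G where "G \<in> \<V>" "A \<union> B \<subseteq> c G" using W(3) by blast
    then show "\<exists>U\<in>\<U>. A \<union> B \<subseteq> U" using c[OF \<open>G \<in> \<V>\<close>] by blast
  qed
qed

lemma loc_closed_nbhd:
  assumes LC: "locally_closed_in X M"
  shows "\<exists>V. openin X V \<and> M \<subseteq> V \<and> closedin (subtopology X V) M"
proof -
  define \<G> where "\<G> = {G. openin X G \<and> (\<exists>C. closedin X C \<and> G \<inter> M = C \<inter> G)}"
  have Gop: "\<forall>G\<in>\<G>. openin X G" unfolding \<G>_def by blast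
  have LC2: "\<forall>x\<in>M. \<exists>N. (\<exists>G. openin X G \<and> x \<in> G \<and> G \<subseteq> N) \<and> N \<subseteq> topspace X \<and>
                 closedin (subtopology X N) (N \<inter> M)"
    using LC unfolding locally_closed_in_def by (rule conjunct2)
  have MG: "M \<subseteq> \<Union>\<G>"
  proof
    fix x assume x: "x \<in> M"
    obtain N where N: "(\<exists>G. openin X G \<and> x \<in> G \<and> G \<subseteq> N) \<and> N \<subseteq> topspace X \<and>
                 closedin (subtopology X N) (N \<inter> M)" using bspec[OF LC2 x] ..
    obtain G where G: "openin X G \<and> x \<in> G \<and> G \<subseteq> N" using conjunct1[OF N] ..
    have "\<exists>C. closedin X C \<and> N \<inter> M = C \<inter> N"
      using conjunct2[OF conjunct2[OF N]] unfolding closedin_subtopology .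
    then obtain C where C: "closedin X C \<and> N \<inter> M = C \<inter> N" ..
    have "G \<inter> M = C \<inter> G" using C G by blast
    then have "G \<in> \<G>" unfolding \<G>_def using G C by blast
    then show "x \<in> \<Union>\<G>" using G by blast
  qed
  define V where "V = \<Union>\<G>"
  have Vop: "openin X V" unfolding V_def using Gop by (intro openin_Union) blast
  have VM: "V - M = (\<Union>G\<in>\<G>. G - M)" unfolding V_def by blast
  have "openin X (G - M)" if Gin: "G \<in> \<G>" for G
  proof -
    have "openin X G \<and> (\<exists>C. closedin X C \<and> G \<inter> M = C \<inter> G)" using Gin unfolding \<G>_def by simp
    then obtain C where C: "closedin X C" "G \<inter> M = C \<inter> G" and oG: "openin X G" by blast
    then have "G - M = G - C" by blast
    then show ?thesis using oG C(1) by (simp add: openin_diff)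
  qed
  then have oVM: "openin X (V - M)" unfolding VM by blast
  have Vsub: "V \<subseteq> topspace X" using openin_subset[OF Vop] .
  have "closedin X (topspace X - (V - M))" using oVM by (simp add: closedin_diff)
  moreover have "M = (topspace X - (V - M)) \<inter> V" using MG Vsub unfolding V_def by blast
  ultimately have "closedin (subtopology X V) M" unfolding closedin_subtopology by blast
  then show ?thesis using Vop MG unfolding V_def by blast
qed

theorem lemma2p1:
  fixes X :: "'a topology" and I :: "'i set" and U :: "'i \<Rightarrow> 'a set"
  assumes "Hausdorff_space X"
    and "\<forall>i\<in>I. openin X (U i)"
  shows
    "(\<forall>M. regular_space X \<and> compactin X M \<and> M \<subseteq> (\<Union>i\<in>I. U i) \<longrightarrow>
        (\<exists>\<W>. star_property X I U \<W> \<and> M \<subseteq> \<Union>\<W>))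
     \<and> (paracompact_space X \<and> topspace X \<subseteq> (\<Union>i\<in>I. U i) \<longrightarrow>
        (\<exists>\<W>. star_property X I U \<W> \<and> \<Union>\<W> = topspace X))
     \<and> (\<forall>M. paracompact_space X \<and> closedin X M \<and> M \<subseteq> (\<Union>i\<in>I. U i) \<longrightarrow>
        (\<exists>\<W>. star_property X I U \<W> \<and> M \<subseteq> \<Union>\<W>))
     \<and> (\<forall>M. locally_closed_in X M \<and>
            (\<forall>V. openin X V \<and> M \<subseteq> V \<longrightarrow>
               (\<exists>V'. openin X V' \<and> M \<subseteq> V' \<and> V' \<subseteq> V \<and> paracompact_space (subtopology X V'))) \<and>
            M \<subseteq> (\<Union>i\<in>I. U i) \<longrightarrow>
        (\<exists>\<W>. star_property X I U \<W> \<and> M \<subseteq> \<Union>\<W>))"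
proof -
  have Uop: "\<forall>V\<in>U ` I. openin X V" using assms(2) by blast
  have conv: "star_property X I U \<W>" if W1: "\<forall>W\<in>\<W>. openin X W" and
      W3: "\<forall>A\<in>\<W>. \<forall>B\<in>\<W>. A \<inter> B \<noteq> {} \<longrightarrow> (\<exists>V\<in>U ` I. A \<union> B \<subseteq> V)" for \<W>
    unfolding star_property_def
  proof (intro conjI ballI impI)
    show "openin X W" if "W \<in> \<W>" for W using W1 that by blast
    fix A B assume "A \<in> \<W>" "B \<in> \<W>" "A \<inter> B \<noteq> {}"
    then have "\<exists>V\<in>U ` I. A \<union> B \<subseteq> V" using W3 by blast
    then show "\<exists>i\<in>I. A \<union> B \<subseteq> U i" by blast
  qed
  have cov: "\<Union>(U ` I) = (\<Union>i\<in>I. U i)" by simp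
  have pa: "\<exists>\<W>. star_property X I U \<W> \<and> M \<subseteq> \<Union>\<W>"
    if a: "regular_space X \<and> compactin X M \<and> M \<subseteq> (\<Union>i\<in>I. U i)" for M
  proof -
    have R: "regular_space X" and Mc: "compactin X M" and c: "M \<subseteq> \<Union>(U ` I)"
      using a by simp_all
    obtain \<W> where W0: "(\<forall>W\<in>\<W>. openin X W) \<and> M \<subseteq> \<Union>\<W> \<and>
           (\<forall>A\<in>\<W>. \<forall>B\<in>\<W>. A \<inter> B \<noteq> {} \<longrightarrow> (\<exists>V\<in>U ` I. A \<union> B \<subseteq> V))"
      using gen_a[OF R Mc Uop c] ..
    have "star_property X I U \<W>" by (rule conv[OF conjunct1[OF W0] conjunct2[OF conjunct2[OF W0]]])
    then show ?thesis using conjunct1[OF conjunct2[OF W0]] by blast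
  qed
  have pb: "\<exists>\<W>. star_property X I U \<W> \<and> \<Union>\<W> = topspace X"
    if a: "paracompact_space X \<and> topspace X \<subseteq> (\<Union>i\<in>I. U i)"
  proof -
    have P: "paracompact_space X" and c: "topspace X \<subseteq> \<Union>(U ` I)" using a by simp_all
    obtain \<W> where W0: "(\<forall>W\<in>\<W>. openin X W) \<and> \<Union>\<W> = topspace X \<and>
           (\<forall>A\<in>\<W>. \<forall>B\<in>\<W>. A \<inter> B \<noteq> {} \<longrightarrow> (\<exists>V\<in>U ` I. A \<union> B \<subseteq> V))"
      using gen_b[OF P assms(1) Uop c] ..
    have "star_property X I U \<W>" by (rule conv[OF conjunct1[OF W0] conjunct2[OF conjunct2[OF W0]]])
    then show ?thesis using conjunct1[OF conjunct2[OF W0]] by blast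
  qed
  have pc: "\<exists>\<W>. star_property X I U \<W> \<and> M \<subseteq> \<Union>\<W>"
    if a: "paracompact_space X \<and> closedin X M \<and> M \<subseteq> (\<Union>i\<in>I. U i)" for M
  proof -
    have P: "paracompact_space X" and M: "closedin X M" and c: "M \<subseteq> \<Union>(U ` I)"
      using a by simp_all
    obtain \<W> where W0: "(\<forall>W\<in>\<W>. openin X W) \<and> M \<subseteq> \<Union>\<W> \<and>
           (\<forall>A\<in>\<W>. \<forall>B\<in>\<W>. A \<inter> B \<noteq> {} \<longrightarrow> (\<exists>V\<in>U ` I. A \<union> B \<subseteq> V))"
      using gen_c[OF P assms(1) M Uop c] ..
    have "star_property X I U \<W>" by (rule conv[OF conjunct1[OF W0] conjunct2[OF conjunct2[OF W0]]])
    then show ?thesis using conjunct1[OF conjunct2[OF W0]] by blast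
  qed
  have pd: "\<exists>\<W>. star_property X I U \<W> \<and> M \<subseteq> \<Union>\<W>"
    if a: "locally_closed_in X M \<and>
            (\<forall>V. openin X V \<and> M \<subseteq> V \<longrightarrow>
               (\<exists>V'. openin X V' \<and> M \<subseteq> V' \<and> V' \<subseteq> V \<and> paracompact_space (subtopology X V'))) \<and>
            M \<subseteq> (\<Union>i\<in>I. U i)" for M
  proof -
    have LC: "locally_closed_in X M" and nb: "\<forall>V. openin X V \<and> M \<subseteq> V \<longrightarrow>
               (\<exists>V'. openin X V' \<and> M \<subseteq> V' \<and> V' \<subseteq> V \<and> paracompact_space (subtopology X V'))"
      and MU: "M \<subseteq> (\<Union>i\<in>I. U i)" using a by simp_all
    obtain V0 where V0: "openin X V0 \<and> M \<subseteq> V0 \<and> closedin (subtopology X V0) M"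
      using loc_closed_nbhd[OF LC] ..
    have oU: "openin X (\<Union>i\<in>I. U i)" using assms(2) by blast
    have oV: "openin X (V0 \<inter> (\<Union>i\<in>I. U i))" using V0 oU by blast
    have MV: "M \<subseteq> V0 \<inter> (\<Union>i\<in>I. U i)" using V0 MU by blast
    obtain V' where V': "openin X V' \<and> M \<subseteq> V' \<and> V' \<subseteq> V0 \<inter> (\<Union>i\<in>I. U i) \<and>
        paracompact_space (subtopology X V')"
      using mp[OF spec[OF nb, of "V0 \<inter> (\<Union>i\<in>I. U i)"] conjI[OF oV MV]] ..
    have V'o: "openin X V'" and MV': "M \<subseteq> V'" and V'V: "V' \<subseteq> V0"
      and V'P: "paracompact_space (subtopology X V')" using V' by simp_all
    have "\<exists>C. closedin X C \<and> M = C \<inter> V0" using V0 unfolding closedin_subtopology by blast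
    then obtain C where C: "closedin X C \<and> M = C \<inter> V0" ..
    have "M = C \<inter> V'" using C MV' V'V by blast
    then have MC: "closedin (subtopology X V') M"
      unfolding closedin_subtopology using C by blast
    have HY: "Hausdorff_space (subtopology X V')" using assms(1) by (rule Hausdorff_space_subtopology)
    have Uop': "\<forall>W\<in>(\<lambda>i. U i \<inter> V') ` I. openin (subtopology X V') W"
    proof
      fix W assume "W \<in> (\<lambda>i. U i \<inter> V') ` I"
      then obtain i where i: "i \<in> I" "W = U i \<inter> V'" by blast
      have "openin X (U i \<inter> V')" using bspec[OF assms(2) i(1)] V'o by (rule openin_Int)
      then show "openin (subtopology X V') W" unfolding i(2) openin_open_subtopology[OF V'o] by blast
    qed
    have cov': "M \<subseteq> \<Union>((\<lambda>i. U i \<inter> V') ` I)" using MU MV' by blast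
    obtain \<W> where W0: "(\<forall>W\<in>\<W>. openin (subtopology X V') W) \<and> M \<subseteq> \<Union>\<W> \<and>
        (\<forall>A\<in>\<W>. \<forall>B\<in>\<W>. A \<inter> B \<noteq> {} \<longrightarrow> (\<exists>V\<in>(\<lambda>i. U i \<inter> V') ` I. A \<union> B \<subseteq> V))"
      using gen_c[OF V'P HY MC Uop' cov'] ..
    note W = conjunct1[OF W0] conjunct1[OF conjunct2[OF W0]] conjunct2[OF conjunct2[OF W0]]
    have "star_property X I U \<W>"
      unfolding star_property_def
    proof (intro conjI ballI impI)
      fix W assume "W \<in> \<W>"
      then have "openin (subtopology X V') W" using W(1) by blast
      then show "openin X W" using V'o by (rule openin_trans_full)
    next
      fix A B assume "A \<in> \<W>" "B \<in> \<W>" "A \<inter> B \<noteq> {}"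
      then have "\<exists>V\<in>(\<lambda>i. U i \<inter> V') ` I. A \<union> B \<subseteq> V" using W(3) by blast
      then show "\<exists>i\<in>I. A \<union> B \<subseteq> U i" by blast
    qed
    then show ?thesis using W(2) by blast
  qed
  show ?thesis using pa pb pc pd by blast
qed

end
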